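(* Let $K$ be a class of partial functions from $\mathbb{N}^k$ to $\mathbb{N}$ (of various arities $k\ge1$) satisfying: (1) $K$ contains all partial recursive functions and is closed under substitution, primitive recursion and the $\mu$-operator; (2) for every unary function $f\in K$ there exist a set $M\subseteq\mathbb{N}$ and unary functions $\alpha,\omega\in K$ whose domains contain $M$, such that the indicator function of $M$ belongs to $K$, and for all $x,y$, $f(x)$ is defined and equals $y$ iff there is $m\in M$ with $\alpha(m)=x$ and $\omega(m)=y$; (3) there exists a binary function $F\in K$ such that for every unary $f\in K$ there is $n$ with $F(n,\cdot)=f$. Let $F$ be such a binary universal function. Then an arbitrary partial function $f$ (of any arity) belongs to $K$ if and only if $f$ is partial recursive relative to $F$.
   Context: Fix a standard recursive bijective encoding of tuples of natural numbers by natural numbers. The graph of a partial function $g:\mathbb{N}^k\to\mathbb{N}$ is the set of codes of tuples $(x_1,\dots,x_k,y)$ with $g(x_1,\dots,x_k)$ defined and equal to $y$. For sets $X,Y\subseteq\mathbb{N}$, $X$ is enumeration reducible to $Y$ if there is a recursively enumerable set $W$ of pairs $(x,u)$ such that $x\in X$ iff there exists $u$ with $(x,u)\in W$ and $D_u\subseteq Y$, where $D_u$ is the finite set with canonical index $u$. A partial function $f$ is partial recursive relative to a partial function $F$ if the graph of $f$ is enumeration reducible to the graph of $F$. *)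

theory Defs
  imports Main "HOL-Library.Nat_Bijection"
begin

text \<open>A partial function N^k -> N is represented as a map on argument lists,
  together with its arity k; it is undefined on lists of the wrong length.\<close>

type_synonym pfun = "nat list \<Rightarrow> nat option"

definition has_arity :: "nat \<Rightarrow> pfun \<Rightarrow> bool" where
  "has_arity k f \<longleftrightarrow> (\<forall>xs. length xs \<noteq> k \<longrightarrow> f xs = None)"

definition pcomp :: "nat \<Rightarrow> pfun \<Rightarrow> pfun list \<Rightarrow> pfun" where
  "pcomp k g hs xs =
     (if length xs = k \<and> (\<forall>h\<in>set hs. h xs \<noteq> None)
      then g (map (\<lambda>h. the (h xs)) hs) else None)"

fun prec_aux :: "pfun \<Rightarrow> pfun \<Rightarrow> nat \<Rightarrow> nat list \<Rightarrow> nat option" where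
  "prec_aux g h 0 ys = g ys"
| "prec_aux g h (Suc n) ys =
     (case prec_aux g h n ys of None \<Rightarrow> None | Some r \<Rightarrow> h (n # r # ys))"

definition prec :: "pfun \<Rightarrow> pfun \<Rightarrow> pfun" where
  "prec g h xs = (case xs of [] \<Rightarrow> None | n # ys \<Rightarrow> prec_aux g h n ys)"

definition pmu :: "pfun \<Rightarrow> pfun" where
  "pmu g xs =
     (if \<exists>n. g (n # xs) = Some 0 \<and> (\<forall>m<n. g (m # xs) \<noteq> None)
      then Some (LEAST n. g (n # xs) = Some 0 \<and> (\<forall>m<n. g (m # xs) \<noteq> None))
      else None)"

inductive partrec :: "nat \<Rightarrow> pfun \<Rightarrow> bool" where
  zero: "partrec 1 (\<lambda>xs. if length xs = 1 then Some 0 else None)"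
| succ: "partrec 1 (\<lambda>xs. if length xs = 1 then Some (Suc (hd xs)) else None)"
| proj: "i < k \<Longrightarrow> partrec k (\<lambda>xs. if length xs = k then Some (xs ! i) else None)"
| compose: "partrec m g \<Longrightarrow> length hs = m \<Longrightarrow> (\<forall>h\<in>set hs. partrec k h)
         \<Longrightarrow> partrec k (pcomp k g hs)"
| prim_rec: "partrec k g \<Longrightarrow> partrec (k + 2) h \<Longrightarrow> partrec (k + 1) (prec g h)"
| minimize: "partrec (k + 1) g \<Longrightarrow> partrec k (pmu g)"

text \<open>Tuples are coded by the standard bijection list_encode; finite sets by
  canonical index D_u = set_decode u.\<close>
definition graph :: "nat \<Rightarrow> pfun \<Rightarrow> nat set" where
  "graph k f = {list_encode (xs @ [y]) | xs y. length xs = k \<and> f xs = Some y}"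

definition re_set :: "nat set \<Rightarrow> bool" where
  "re_set A \<longleftrightarrow> (\<exists>f. partrec 1 f \<and> A = {x. f [x] \<noteq> None})"

definition enum_reducible :: "nat set \<Rightarrow> nat set \<Rightarrow> bool" where
  "enum_reducible X Y \<longleftrightarrow>
     (\<exists>W. re_set W \<and>
        (\<forall>x. x \<in> X \<longleftrightarrow> (\<exists>u. list_encode [x, u] \<in> W \<and> set_decode u \<subseteq> Y)))"

definition rel_partrec :: "nat \<Rightarrow> pfun \<Rightarrow> nat \<Rightarrow> pfun \<Rightarrow> bool" where
  "rel_partrec k f j F \<longleftrightarrow> enum_reducible (graph k f) (graph j F)"

end

theory Submission
  imports Defs
begin


definition tot :: "nat \<Rightarrow> (nat list \<Rightarrow> nat) \<Rightarrow> pfun" where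
  "tot k f = (\<lambda>xs. if length xs = k then Some (f xs) else None)"

definition ind :: "bool \<Rightarrow> nat" where "ind P = (if P then 1 else 0)"

lemma ind_simps[simp]: "ind P = 0 \<longleftrightarrow> \<not> P" "ind P = 1 \<longleftrightarrow> P" "ind P = Suc 0 \<longleftrightarrow> P" "ind True = 1" "ind False = 0"
  by (auto simp: ind_def)

fun trec :: "(nat list \<Rightarrow> nat) \<Rightarrow> (nat list \<Rightarrow> nat) \<Rightarrow> nat \<Rightarrow> nat list \<Rightarrow> nat" where
  "trec g h 0 ys = g ys"
| "trec g h (Suc n) ys = h (n # trec g h n ys # ys)"

locale cls =
  fixes S :: "(nat \<times> pfun) set"
  assumes zeroS: "(1, tot 1 (\<lambda>_. 0)) \<in> S"
    and succS: "(1, tot 1 (\<lambda>xs. Suc (hd xs))) \<in> S"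
    and projS: "1 \<le> k \<Longrightarrow> i < k \<Longrightarrow> (k, tot k (\<lambda>xs. xs ! i)) \<in> S"
    and compS: "1 \<le> m \<Longrightarrow> 1 \<le> k \<Longrightarrow> (m, g) \<in> S \<Longrightarrow> length hs = m \<Longrightarrow> \<forall>h\<in>set hs. (k, h) \<in> S
                 \<Longrightarrow> (k, pcomp k g hs) \<in> S"
    and precS: "1 \<le> k \<Longrightarrow> (k, g) \<in> S \<Longrightarrow> (k + 2, h) \<in> S \<Longrightarrow> (k + 1, prec g h) \<in> S"
    and muS: "1 \<le> k \<Longrightarrow> (k + 1, g) \<in> S \<Longrightarrow> (k, pmu g) \<in> S"
begin

definition tK :: "nat \<Rightarrow> (nat list \<Rightarrow> nat) \<Rightarrow> bool" where
  "tK k f \<longleftrightarrow> (k, tot k f) \<in> S"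

lemma tK_cong: "tK k f \<Longrightarrow> (\<And>xs. length xs = k \<Longrightarrow> f xs = g xs) \<Longrightarrow> tK k g"
proof -
  assume a: "tK k f" and b: "\<And>xs. length xs = k \<Longrightarrow> f xs = g xs"
  have "tot k f = tot k g" using b by (auto simp: tot_def)
  with a show ?thesis by (simp add: tK_def)
qed

lemma tK_proj: "1 \<le> k \<Longrightarrow> i < k \<Longrightarrow> tK k (\<lambda>xs. xs ! i)"
  using projS by (simp add: tK_def)

lemma tK_compL:
  assumes "1 \<le> m" "1 \<le> k" "tK m g" "length hs = m" "\<forall>h\<in>set hs. tK k h"
  shows "tK k (\<lambda>xs. g (map (\<lambda>h. h xs) hs))"
proof -
  have "(k, pcomp k (tot m g) (map (tot k) hs)) \<in> S"
    using assms by (intro compS) (auto simp: tK_def)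
  moreover have "pcomp k (tot m g) (map (tot k) hs) = tot k (\<lambda>xs. g (map (\<lambda>h. h xs) hs))"
    using assms(4) by (auto simp: pcomp_def tot_def fun_eq_iff comp_def)
  ultimately show ?thesis by (simp add: tK_def)
qed

lemma tK_comp1: "tK 1 g \<Longrightarrow> 1 \<le> k \<Longrightarrow> tK k a \<Longrightarrow> tK k (\<lambda>xs. g [a xs])"
  using tK_compL[of 1 k g "[a]"] by simp

lemma tK_comp2: "tK 2 g \<Longrightarrow> 1 \<le> k \<Longrightarrow> tK k a \<Longrightarrow> tK k b \<Longrightarrow> tK k (\<lambda>xs. g [a xs, b xs])"
  using tK_compL[of 2 k g "[a, b]"] by simp

lemma tK_comp3: "tK 3 g \<Longrightarrow> 1 \<le> k \<Longrightarrow> tK k a \<Longrightarrow> tK k b \<Longrightarrow> tK k c \<Longrightarrow> tK k (\<lambda>xs. g [a xs, b xs, c xs])"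
  using tK_compL[of 3 k g "[a, b, c]"] by simp

lemma tK_compP1:
  assumes "(1, g) \<in> S" "1 \<le> k" "tK k a" "\<forall>xs. length xs = k \<longrightarrow> g [a xs] \<noteq> None"
  shows "tK k (\<lambda>xs. the (g [a xs]))"
proof -
  have "(k, pcomp k g [tot k a]) \<in> S"
    using assms by (intro compS) (auto simp: tK_def)
  moreover have "pcomp k g [tot k a] = tot k (\<lambda>xs. the (g [a xs]))"
    using assms(4) by (auto simp: pcomp_def tot_def fun_eq_iff)
  ultimately show ?thesis by (simp add: tK_def)
qed

lemma tK_prec:
  assumes "1 \<le> k" "tK k g" "tK (k + 2) h"
  shows "tK (k + 1) (\<lambda>xs. trec g h (hd xs) (tl xs))"
proof -
  have "(k + 1, prec (tot k g) (tot (k + 2) h)) \<in> S"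
    using assms by (intro precS) (auto simp: tK_def)
  moreover have aux: "prec_aux (tot k g) (tot (k + 2) h) n ys = (if length ys = k then Some (trec g h n ys) else None)" for n ys
    by (induction n) (auto simp: tot_def[abs_def])
  have "prec (tot k g) (tot (k + 2) h) = tot (k + 1) (\<lambda>xs. trec g h (hd xs) (tl xs))"
  proof
    fix xs show "prec (tot k g) (tot (k + 2) h) xs = tot (k + 1) (\<lambda>xs. trec g h (hd xs) (tl xs)) xs"
      by (cases xs) (simp_all only: prec_def aux list.case, auto simp: tot_def)
  qed
  ultimately show ?thesis by (simp add: tK_def)
qed

lemma tK_mu:
  assumes "1 \<le> k" "tK (k + 1) g" "\<And>xs. length xs = k \<Longrightarrow> \<exists>n. g (n # xs) = 0"
  shows "tK k (\<lambda>xs. LEAST n. g (n # xs) = 0)"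
proof -
  have "(k, pmu (tot (k + 1) g)) \<in> S"
    using assms by (intro muS) (auto simp: tK_def)
  moreover have "pmu (tot (k + 1) g) = tot k (\<lambda>xs. LEAST n. g (n # xs) = 0)"
    using assms(3) by (auto simp: fun_eq_iff pmu_def tot_def)
  ultimately show ?thesis by (simp add: tK_def)
qed

lemma tK_const: "1 \<le> k \<Longrightarrow> tK k (\<lambda>_. c)"
proof (induction c)
  case 0
  have "tK k (\<lambda>xs. (\<lambda>_. 0) [xs ! 0])"
    by (rule tK_comp1) (use 0 zeroS tK_proj[of k 0] in \<open>auto simp: tK_def\<close>)
  then show ?case by simp
next
  case (Suc c)
  have "tK k (\<lambda>xs. (\<lambda>ys. Suc (hd ys)) [c])"
    by (rule tK_comp1) (use Suc succS in \<open>auto simp: tK_def\<close>)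
  then show ?case by simp
qed

lemma tK_Suc: "1 \<le> k \<Longrightarrow> tK k a \<Longrightarrow> tK k (\<lambda>xs. Suc (a xs))"
  using tK_comp1[of "\<lambda>ys. Suc (hd ys)" k a] succS by (simp add: tK_def)


lemma tK_prec1: "tK 1 g \<Longrightarrow> tK 3 h \<Longrightarrow> tK 2 (\<lambda>xs. trec g h (hd xs) (tl xs))"
proof -
  have e: "(1::nat)+1 = 2" "(1::nat)+2 = 3" by simp_all
  show "tK 1 g \<Longrightarrow> tK 3 h \<Longrightarrow> tK 2 (\<lambda>xs. trec g h (hd xs) (tl xs))"
    using tK_prec[of 1 g h] unfolding e by simp
qed

lemma len_simps: "length xs = 2 \<longleftrightarrow> (\<exists>a b. xs = [a, b])" "length xs = 3 \<longleftrightarrow> (\<exists>a b c. xs = [a, b, c])"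
  "length xs = 1 \<longleftrightarrow> (\<exists>a. xs = [a])"
  by (auto simp: length_Suc_conv numeral_2_eq_2 numeral_3_eq_3)

lemma tK_add2: "tK 2 (\<lambda>xs. xs!0 + xs!1)"
proof -
  have "tK 2 (\<lambda>xs. trec (\<lambda>ys. ys!0) (\<lambda>zs. Suc (zs!1)) (hd xs) (tl xs))"
    by (rule tK_prec1) (intro tK_Suc tK_proj; simp)+
  then show ?thesis by (rule tK_cong) (clarsimp simp: len_simps, induct_tac a, auto)
qed

lemma tK_add: "1 \<le> k \<Longrightarrow> tK k a \<Longrightarrow> tK k b \<Longrightarrow> tK k (\<lambda>xs. a xs + b xs)"
  using tK_comp2[OF tK_add2] by simp

lemma tK_mult2: "tK 2 (\<lambda>xs. xs!0 * xs!1)"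
proof -
  have "tK 2 (\<lambda>xs. trec (\<lambda>ys. 0) (\<lambda>zs. zs!1 + zs!2) (hd xs) (tl xs))"
    by (rule tK_prec1) (intro tK_add tK_proj tK_const; simp)+
  then show ?thesis by (rule tK_cong) (clarsimp simp: len_simps, induct_tac a, auto)
qed

lemma tK_mult: "1 \<le> k \<Longrightarrow> tK k a \<Longrightarrow> tK k b \<Longrightarrow> tK k (\<lambda>xs. a xs * b xs)"
  using tK_comp2[OF tK_mult2] by simp

lemma tK_pred2: "tK 2 (\<lambda>xs. xs!0 - 1)"
proof -
  have "tK 2 (\<lambda>xs. trec (\<lambda>ys. 0) (\<lambda>zs. zs!0) (hd xs) (tl xs))"
    by (rule tK_prec1) (intro tK_proj tK_const; simp)+
  then show ?thesis by (rule tK_cong) (clarsimp simp: len_simps, induct_tac a, auto)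
qed

lemma tK_pred: "1 \<le> k \<Longrightarrow> tK k a \<Longrightarrow> tK k (\<lambda>xs. a xs - 1)"
  using tK_comp2[OF tK_pred2, of k a a] by simp

lemma tK_sub2: "tK 2 (\<lambda>xs. xs!1 - xs!0)"
proof -
  have "tK 2 (\<lambda>xs. trec (\<lambda>ys. ys!0) (\<lambda>zs. zs!1 - 1) (hd xs) (tl xs))"
    by (rule tK_prec1) (intro tK_proj tK_pred; simp)+
  then show ?thesis by (rule tK_cong) (clarsimp simp: len_simps, induct_tac a, auto)
qed

lemma tK_sub: "1 \<le> k \<Longrightarrow> tK k a \<Longrightarrow> tK k b \<Longrightarrow> tK k (\<lambda>xs. a xs - b xs)"
  using tK_comp2[OF tK_sub2, of k b a] by simp

lemma tK_eq: "1 \<le> k \<Longrightarrow> tK k a \<Longrightarrow> tK k b \<Longrightarrow> tK k (\<lambda>xs. ind (a xs = b xs))"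
  by (rule tK_cong[where f="\<lambda>xs. 1 - ((a xs - b xs) + (b xs - a xs))"], (intro tK_sub tK_add tK_const; simp), auto simp: ind_def)

lemma tK_less: "1 \<le> k \<Longrightarrow> tK k a \<Longrightarrow> tK k b \<Longrightarrow> tK k (\<lambda>xs. ind (a xs < b xs))"
  by (rule tK_cong[where f="\<lambda>xs. 1 - (1 - (b xs - a xs))"], (intro tK_sub tK_const; simp), auto simp: ind_def)

lemma tK_le: "1 \<le> k \<Longrightarrow> tK k a \<Longrightarrow> tK k b \<Longrightarrow> tK k (\<lambda>xs. ind (a xs \<le> b xs))"
  by (rule tK_cong[where f="\<lambda>xs. 1 - (a xs - b xs)"], (intro tK_sub tK_const; simp), auto simp: ind_def)

lemma tK_not: "1 \<le> k \<Longrightarrow> tK k (\<lambda>xs. ind (P xs)) \<Longrightarrow> tK k (\<lambda>xs. ind (\<not> P xs))"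
  by (rule tK_cong[where f="\<lambda>xs. 1 - ind (P xs)"], (intro tK_sub tK_const; simp), auto simp: ind_def)

lemma tK_conj: "1 \<le> k \<Longrightarrow> tK k (\<lambda>xs. ind (P xs)) \<Longrightarrow> tK k (\<lambda>xs. ind (Q xs)) \<Longrightarrow> tK k (\<lambda>xs. ind (P xs \<and> Q xs))"
  by (rule tK_cong[where f="\<lambda>xs. ind (P xs) * ind (Q xs)"], (intro tK_mult; simp), auto simp: ind_def)

lemma tK_disj: "1 \<le> k \<Longrightarrow> tK k (\<lambda>xs. ind (P xs)) \<Longrightarrow> tK k (\<lambda>xs. ind (Q xs)) \<Longrightarrow> tK k (\<lambda>xs. ind (P xs \<or> Q xs))"
  by (rule tK_cong[where f="\<lambda>xs. 1 - (1 - (ind (P xs) + ind (Q xs)))"], (intro tK_sub tK_add tK_const; simp), auto simp: ind_def)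

lemma tK_imp: "1 \<le> k \<Longrightarrow> tK k (\<lambda>xs. ind (P xs)) \<Longrightarrow> tK k (\<lambda>xs. ind (Q xs)) \<Longrightarrow> tK k (\<lambda>xs. ind (P xs \<longrightarrow> Q xs))"
  by (rule tK_cong[OF tK_disj[OF _ tK_not]]) auto

lemma tK_if: "1 \<le> k \<Longrightarrow> tK k (\<lambda>xs. ind (P xs)) \<Longrightarrow> tK k a \<Longrightarrow> tK k b \<Longrightarrow> tK k (\<lambda>xs. if P xs then a xs else b xs)"
  by (rule tK_cong[where f="\<lambda>xs. ind (P xs) * a xs + (1 - ind (P xs)) * b xs"], (intro tK_mult tK_add tK_sub tK_const; simp), auto simp: ind_def)

lemma tK_pow2: "tK 2 (\<lambda>xs. xs!1 ^ xs!0)"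
proof -
  have "tK 2 (\<lambda>xs. trec (\<lambda>ys. 1) (\<lambda>zs. zs!1 * zs!2) (hd xs) (tl xs))"
    by (rule tK_prec1) (intro tK_proj tK_mult tK_const; simp)+
  then show ?thesis by (rule tK_cong) (clarsimp simp: len_simps, induct_tac a, auto)
qed

lemma tK_pow: "1 \<le> k \<Longrightarrow> tK k a \<Longrightarrow> tK k b \<Longrightarrow> tK k (\<lambda>xs. a xs ^ b xs)"
  using tK_comp2[OF tK_pow2, of k b a] by simp

lemma tK_tri2: "tK 2 (\<lambda>xs. triangle (xs!0))"
proof -
  have "tK 2 (\<lambda>xs. trec (\<lambda>ys. 0) (\<lambda>zs. zs!1 + Suc (zs!0)) (hd xs) (tl xs))"
    by (rule tK_prec1) (intro tK_proj tK_add tK_Suc tK_const; simp)+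
  then show ?thesis by (rule tK_cong) (clarsimp simp: len_simps, induct_tac a, auto)
qed

lemma tK_tri: "1 \<le> k \<Longrightarrow> tK k a \<Longrightarrow> tK k (\<lambda>xs. triangle (a xs))"
  using tK_comp2[OF tK_tri2, of k a a] by simp


lemma tK_mu1: "tK 2 g \<Longrightarrow> (\<And>xs. length xs = 1 \<Longrightarrow> \<exists>n. g (n # xs) = 0) \<Longrightarrow> tK 1 (\<lambda>xs. LEAST n. g (n # xs) = 0)"
proof -
  have e: "(1::nat)+1 = 2" by simp_all
  show "tK 2 g \<Longrightarrow> (\<And>xs. length xs = 1 \<Longrightarrow> \<exists>n. g (n # xs) = 0) \<Longrightarrow> tK 1 (\<lambda>xs. LEAST n. g (n # xs) = 0)"
    using tK_mu[of 1 g] unfolding e by simp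
qed

lemma tK_mu2: "tK 3 g \<Longrightarrow> (\<And>xs. length xs = 2 \<Longrightarrow> \<exists>n. g (n # xs) = 0) \<Longrightarrow> tK 2 (\<lambda>xs. LEAST n. g (n # xs) = 0)"
proof -
  have e: "(2::nat)+1 = 3" by simp_all
  show "tK 3 g \<Longrightarrow> (\<And>xs. length xs = 2 \<Longrightarrow> \<exists>n. g (n # xs) = 0) \<Longrightarrow> tK 2 (\<lambda>xs. LEAST n. g (n # xs) = 0)"
    using tK_mu[of 2 g] unfolding e by simp
qed

lemma div_least: "(LEAST n. u < d * Suc n \<or> d = 0) = (u::nat) div d"
proof (cases "d = 0")
  case True then show ?thesis by simp
next
  case False
  show ?thesis
  proof (rule Least_equality)
    show "u < d * Suc (u div d) \<or> d = 0"
      using False by (metis add.commute div_mult_mod_eq mod_less_divisor mult_Suc_right nat_add_left_cancel_less neq0_conv mult.commute)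
    show "\<And>y. u < d * Suc y \<or> d = 0 \<Longrightarrow> u div d \<le> y"
      using False by (metis less_Suc_eq_le less_mult_imp_div_less mult.commute)
  qed
qed

lemma tK_div2: "tK 2 (\<lambda>xs. xs!0 div xs!1)"
proof -
  define G where "G = (\<lambda>zs. ind (\<not> (zs!1 < zs!2 * Suc (zs!0) \<or> zs!2 = 0)))"
  have A: "tK 3 G" unfolding G_def
    by (intro tK_not tK_disj tK_less tK_eq tK_mult tK_Suc tK_proj tK_const; simp)
  have B: "\<exists>n. G (n # xs) = 0" if "length xs = 2" for xs
  proof -
    have "xs!0 < xs!1 * Suc (xs!0) \<or> xs!1 = 0" by (cases "xs!1") auto
    then show ?thesis unfolding G_def by auto
  qed
  from tK_mu2[OF A B] show ?thesis
  proof (rule tK_cong)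
    fix xs :: "nat list" assume "length xs = 2"
    then obtain u d where xs: "xs = [u, d]" by (auto simp: len_simps)
    have "(LEAST n. G (n # xs) = 0) = (LEAST n. u < d * Suc n \<or> d = 0)"
      by (rule arg_cong[where f=Least]) (simp add: G_def fun_eq_iff xs)
    then show "(LEAST n. G (n # xs) = 0) = xs!0 div xs!1" by (simp only: div_least) (simp add: xs)
  qed
qed

lemma tK_div: "1 \<le> k \<Longrightarrow> tK k a \<Longrightarrow> tK k b \<Longrightarrow> tK k (\<lambda>xs. a xs div b xs)"
  using tK_comp2[OF tK_div2] by simp

lemma tK_mod: "1 \<le> k \<Longrightarrow> tK k a \<Longrightarrow> tK k b \<Longrightarrow> tK k (\<lambda>xs. a xs mod b xs)"
  by (rule tK_cong[where f="\<lambda>xs. a xs - b xs * (a xs div b xs)"], (intro tK_sub tK_mult tK_div; simp), auto simp: minus_mult_div_eq_mod)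

lemma tK_odd: "1 \<le> k \<Longrightarrow> tK k a \<Longrightarrow> tK k (\<lambda>xs. ind (odd (a xs)))"
  by (rule tK_cong[where f="\<lambda>xs. ind (a xs mod 2 = 1)"], (intro tK_eq tK_mod tK_const; simp), auto simp: odd_iff_mod_2_eq_one)

lemma tK_pe: "1 \<le> k \<Longrightarrow> tK k a \<Longrightarrow> tK k b \<Longrightarrow> tK k (\<lambda>xs. prod_encode (a xs, b xs))"
  by (rule tK_cong[where f="\<lambda>xs. triangle (a xs + b xs) + a xs"], (intro tK_tri tK_add; simp), auto simp: prod_encode_def)

lemma pd_char:
  fixes n :: nat
  defines "t \<equiv> LEAST t. n < triangle (Suc t)"
  shows "prod_decode n = (n - triangle t, t - (n - triangle t))"
proof -
  have ex: "n < triangle (Suc n)" by simp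
  have 1: "n < triangle (Suc t)" unfolding t_def by (rule LeastI[of _ n]) (rule ex)
  have 2: "triangle t \<le> n"
  proof (cases t)
    case 0 then show ?thesis by simp
  next
    case (Suc t')
    then have "t' < t" by simp
    then have "\<not> n < triangle (Suc t')" unfolding t_def by (rule not_less_Least)
    then show ?thesis using Suc by simp
  qed
  define m where "m = n - triangle t"
  have nm: "n = triangle t + m" and mt: "m \<le> t" using 1 2 by (auto simp: m_def)
  have "prod_decode n = prod_decode_aux t m" using nm by (simp add: prod_decode_triangle_add)
  also have "\<dots> = (m, t - m)" using mt by (simp add: prod_decode_aux.simps)
  finally show ?thesis by (simp add: m_def)
qed

lemma tK_pdt1: "tK 1 (\<lambda>xs. LEAST t. xs!0 < triangle (Suc t))"
proof -
  define G where "G = (\<lambda>zs::nat list. ind (\<not> zs!1 < triangle (Suc (zs!0))))"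
  have A: "tK 2 G" unfolding G_def
    by (intro tK_not tK_less tK_tri tK_Suc tK_proj; simp)
  have B: "\<exists>n. G (n # xs) = 0" if "length xs = 1" for xs
  proof -
    show ?thesis by (rule exI[of _ "xs!0"]) (simp add: G_def)
  qed
  have "tK 1 (\<lambda>xs. LEAST n. G (n # xs) = 0)" by (rule tK_mu1[OF A]) (rule B)
  then show ?thesis
  proof (rule tK_cong)
    fix xs :: "nat list"
    show "(LEAST n. G (n # xs) = 0) = (LEAST t. xs!0 < triangle (Suc t))"
      by (rule arg_cong[where f=Least]) (simp add: G_def fun_eq_iff)
  qed
qed

lemma tK_pdt: "1 \<le> k \<Longrightarrow> tK k a \<Longrightarrow> tK k (\<lambda>xs. LEAST t. a xs < triangle (Suc t))"
  using tK_comp1[OF tK_pdt1, of k a] by (simp del: triangle_Suc)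

lemma tK_pfst: "1 \<le> k \<Longrightarrow> tK k a \<Longrightarrow> tK k (\<lambda>xs. fst (prod_decode (a xs)))"
  by (rule tK_cong[where f="\<lambda>xs. a xs - triangle (LEAST t. a xs < triangle (Suc t))"], (intro tK_sub tK_tri tK_pdt; simp), auto simp: pd_char[of "a _"])

lemma tK_psnd: "1 \<le> k \<Longrightarrow> tK k a \<Longrightarrow> tK k (\<lambda>xs. snd (prod_decode (a xs)))"
  by (rule tK_cong[where f="\<lambda>xs. (LEAST t. a xs < triangle (Suc t)) - (a xs - triangle (LEAST t. a xs < triangle (Suc t)))"], (intro tK_sub tK_tri tK_pdt; simp), auto simp: pd_char[of "a _"])

end

definition hdd :: "nat \<Rightarrow> nat" where "hdd z = (if z = 0 then 0 else fst (prod_decode (z - 1)))"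
definition tld :: "nat \<Rightarrow> nat" where "tld z = (if z = 0 then 0 else snd (prod_decode (z - 1)))"

lemma hdd_le[simp]: "hdd (list_encode (x # xs)) = x" by (simp add: hdd_def)
lemma tld_le[simp]: "tld (list_encode (x # xs)) = list_encode xs" by (simp add: tld_def)

lemma nth_tld: "i < length xs \<Longrightarrow> hdd ((tld ^^ i) (list_encode xs)) = xs ! i"
proof (induction xs arbitrary: i)
  case Nil then show ?case by simp
next
  case (Cons x xs)
  then show ?case by (cases i) (simp_all add: funpow_Suc_right del: funpow.simps list_encode.simps)
qed

context cls begin

lemma tK_hdd: "1 \<le> k \<Longrightarrow> tK k a \<Longrightarrow> tK k (\<lambda>xs. hdd (a xs))"
  unfolding hdd_def by (intro tK_if tK_eq tK_pfst tK_pred tK_const; simp)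

lemma tK_tld: "1 \<le> k \<Longrightarrow> tK k a \<Longrightarrow> tK k (\<lambda>xs. tld (a xs))"
  unfolding tld_def by (intro tK_if tK_eq tK_psnd tK_pred tK_const; simp)

lemma tK_tldpow: "1 \<le> k \<Longrightarrow> tK k a \<Longrightarrow> tK k (\<lambda>xs. (tld ^^ i) (a xs))"
  by (induction i) (auto intro: tK_tld)

lemma tK_le_cons: "1 \<le> k \<Longrightarrow> tK k a \<Longrightarrow> tK k (\<lambda>xs. list_encode (l xs)) \<Longrightarrow> tK k (\<lambda>xs. list_encode (a xs # l xs))"
  by (rule tK_cong[where f="\<lambda>xs. Suc (prod_encode (a xs, list_encode (l xs)))"], (intro tK_Suc tK_pe; simp), auto)

lemma tK_le_map: "1 \<le> k \<Longrightarrow> (\<forall>i\<in>set is. tK k (h i)) \<Longrightarrow> tK k (\<lambda>xs. list_encode (l xs))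
   \<Longrightarrow> tK k (\<lambda>xs. list_encode (map (\<lambda>i. h i xs) is @ l xs))"
proof (induction "is")
  case Nil then show ?case by simp
next
  case (Cons a "is")
  have "tK k (\<lambda>xs. list_encode (h a xs # (map (\<lambda>i. h i xs) is @ l xs)))"
    by (rule tK_le_cons) (use Cons.prems Cons.IH in simp_all)
  then show ?case by simp
qed

lemma tK_bex:
  assumes k: "1 \<le> k" and P: "tK (k + 1) P"
  shows "tK (k + 1) (\<lambda>xs. ind (\<exists>m<hd xs. P (m # tl xs) \<noteq> 0))"
proof -
  have P2: "tK (k + 2) (\<lambda>zs. P (zs!0 # drop 2 zs))"
  proof -
    have "tK (k + 2) (\<lambda>zs. P (map (\<lambda>h. h zs) ((\<lambda>zs. zs!0) # map (\<lambda>i zs. zs!(i+2)) [0..<k])))"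
      using k P by (intro tK_compL) (auto intro!: tK_proj)
    then show ?thesis
    proof (rule tK_cong)
      fix zs :: "nat list" assume "length zs = k + 2"
      then have "map (\<lambda>i. zs!(i+2)) [0..<k] = drop 2 zs"
        by (intro nth_equalityI) auto
      then show "P (map (\<lambda>h. h zs) ((\<lambda>zs. zs!0) # map (\<lambda>i zs. zs!(i+2)) [0..<k])) = P (zs!0 # drop 2 zs)"
        by (simp add: comp_def)
    qed
  qed
  have H: "tK (k + 2) (\<lambda>zs. ind (zs!1 \<noteq> 0 \<or> P (zs!0 # drop 2 zs) \<noteq> 0))"
    using k by (intro tK_disj tK_not tK_eq tK_proj tK_const P2; simp)
  have t: "trec (\<lambda>_. 0) (\<lambda>zs. ind (zs!1 \<noteq> 0 \<or> P (zs!0 # drop 2 zs) \<noteq> 0)) n ys = ind (\<exists>m<n. P (m # ys) \<noteq> 0)" for n ys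
    by (induction n) (auto simp: less_Suc_eq ind_def)
  from tK_prec[OF k tK_const[OF k, of 0] H] show ?thesis unfolding t .
qed


lemma tK_hd: "1 \<le> k \<Longrightarrow> tK k hd"
  by (rule tK_cong[OF tK_proj[of k 0]]) (auto, case_tac xs, auto)

lemma tK_un: "tK 1 (\<lambda>xs. A (hd xs)) \<Longrightarrow> 1 \<le> k \<Longrightarrow> tK k a \<Longrightarrow> tK k (\<lambda>xs. A (a xs))"
  using tK_comp1[of "\<lambda>xs. A (hd xs)" k a] by simp

lemma tK_bex2:
  assumes "tK 2 (\<lambda>zs. ind (Q (zs!1) (zs!0)))"
  shows "tK 2 (\<lambda>zs. ind (\<exists>m<zs!0. Q (zs!1) m))"
proof -
  have e: "(1::nat) + 1 = 2" by simp
  have "tK (1 + 1) (\<lambda>xs. ind (\<exists>m<hd xs. (\<lambda>zs. ind (Q (zs!1) (zs!0))) (m # tl xs) \<noteq> 0))"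
    using tK_bex[of 1 "\<lambda>zs. ind (Q (zs!1) (zs!0))"] assms by (simp only: e)
  then have "tK 2 (\<lambda>xs. ind (\<exists>m<hd xs. (\<lambda>zs. ind (Q (zs!1) (zs!0))) (m # tl xs) \<noteq> 0))"
    by (simp only: e)
  then show ?thesis
    by (rule tK_cong) (auto simp: len_simps)
qed

lemma tK_ball3:
  assumes "tK 3 (\<lambda>zs. ind (Q (zs!1) (zs!2) (zs!0)))"
  shows "tK 3 (\<lambda>zs. ind (\<forall>v<zs!0. Q (zs!1) (zs!2) v))"
proof -
  have e: "(2::nat) + 1 = 3" by simp
  have A: "tK 3 (\<lambda>zs. ind (\<not> Q (zs!1) (zs!2) (zs!0)))"
    by (rule tK_not) (use assms in simp_all)
  have "tK (2 + 1) (\<lambda>xs. ind (\<exists>m<hd xs. (\<lambda>zs. ind (\<not> Q (zs!1) (zs!2) (zs!0))) (m # tl xs) \<noteq> 0))"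
    using tK_bex[of 2 "\<lambda>zs. ind (\<not> Q (zs!1) (zs!2) (zs!0))"] A by (simp only: e)
  then have "tK 3 (\<lambda>xs. ind (\<exists>m<hd xs. (\<lambda>zs. ind (\<not> Q (zs!1) (zs!2) (zs!0))) (m # tl xs) \<noteq> 0))"
    by (simp only: e)
  then have "tK 3 (\<lambda>xs. ind (\<not> (\<exists>m<hd xs. (\<lambda>zs. ind (\<not> Q (zs!1) (zs!2) (zs!0))) (m # tl xs) \<noteq> 0)))"
    by (rule tK_not[rotated]) simp
  then show ?thesis
    by (rule tK_cong) (auto simp: len_simps)
qed

end



lemma se3: "set_encode {p, q, r} = 2^p + (if q = p then 0 else 2^q) + (if r = p \<or> r = q then 0 else 2^r)"
  by (cases "q = p"; cases "r = p"; cases "r = q") (auto simp: insert_commute)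

lemma graph_mem: "length xs = k \<Longrightarrow> list_encode (xs @ [y]) \<in> graph k f \<longleftrightarrow> f xs = Some y"
proof
  assume "length xs = k" "list_encode (xs @ [y]) \<in> graph k f"
  then obtain xs' y' where "list_encode (xs @ [y]) = list_encode (xs' @ [y'])" "length xs' = k" "f xs' = Some y'"
    by (auto simp: graph_def)
  then show "f xs = Some y" by (simp add: list_encode_eq)
qed (auto simp: graph_def)

lemma graph2: "list_encode [n, x, y] \<in> graph 2 F \<longleftrightarrow> F [n, x] = Some y"
  using graph_mem[of "[n, x]" 2 y F] by simp

lemma setdec_less: "v \<in> set_decode u \<Longrightarrow> v < u"
proof -
  assume "v \<in> set_decode u"
  then have "odd (u div 2 ^ v)" by (simp add: set_decode_def)
  then have "u div 2 ^ v \<noteq> 0" using odd_pos by fastforce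
  then have "2 ^ v \<le> u" by (simp add: div_eq_0_iff) 
  moreover have "v < 2 ^ v" by simp
  ultimately show "v < u" by (meson less_le_trans)
qed

lemma fin_bound: "finite A \<Longrightarrow> \<forall>v\<in>A. \<exists>m. Q v m \<Longrightarrow> \<exists>B::nat. \<forall>v\<in>A. \<exists>m<B. Q v (m::nat)"
proof (induction A rule: finite_induct)
  case empty then show ?case by simp
next
  case (insert x A)
  then obtain B where B: "\<forall>v\<in>A. \<exists>m<B. Q v m" by auto
  from insert obtain m where m: "Q x m" by auto
  show ?case
  proof (rule exI[of _ "max B (Suc m)"], intro ballI)
    fix v assume "v \<in> insert x A"
    then show "\<exists>m'<max B (Suc m). Q v m'"
    proof
      assume "v = x" then show ?thesis using m by (intro exI[of _ m]) auto
    next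
      assume "v \<in> A" then obtain m' where "m' < B" "Q v m'" using B by auto
      then show ?thesis by (intro exI[of _ m']) auto
    qed
  qed
qed

interpretation P: cls "{(k, f). 1 \<le> k \<and> partrec k f}"
  by unfold_locales
    (insert partrec.zero partrec.succ, auto simp: tot_def intro: partrec.intros partrec.compose[of m _ _ k for m k]
      dest: partrec.prim_rec partrec.minimize)



context cls begin
lemma tK_le_map0: "1 \<le> k \<Longrightarrow> (\<forall>i\<in>set is. tK k (h i)) \<Longrightarrow> tK k (\<lambda>xs. list_encode (map (\<lambda>i. h i xs) is))"
  using tK_le_map[of k "is" h "\<lambda>_. []"] tK_const[of k "list_encode []"] by simp
end

locale mainl = cls S for S +
  fixes F :: pfun
  assumes recS: "\<forall>k f. k \<ge> 1 \<longrightarrow> partrec k f \<longrightarrow> (k, f) \<in> S"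
    and cond2S: "\<forall>f. (1, f) \<in> S \<longrightarrow>
                  (\<exists>M \<alpha> \<omega>. (1, \<alpha>) \<in> S \<and> (1, \<omega>) \<in> S
                     \<and> (\<forall>m\<in>M. \<alpha> [m] \<noteq> None \<and> \<omega> [m] \<noteq> None)
                     \<and> (1, (\<lambda>xs. if length xs = 1 then Some (if hd xs \<in> M then 1 else 0) else None)) \<in> S
                     \<and> (\<forall>x y. f [x] = Some y \<longleftrightarrow> (\<exists>m\<in>M. \<alpha> [m] = Some x \<and> \<omega> [m] = Some y)))"
    and FS: "(2, F) \<in> S"
    and univS: "\<forall>f. (1, f) \<in> S \<longrightarrow> (\<exists>n. \<forall>x. F [n, x] = f [x])"
begin

lemma c2t:
  assumes "(1, g) \<in> S"
  obtains Al Om Ch where "tK 1 (\<lambda>xs. Al (hd xs))" "tK 1 (\<lambda>xs. Om (hd xs))" "tK 1 (\<lambda>xs. Ch (hd xs))"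
    "\<And>x y. g [x] = Some y \<longleftrightarrow> (\<exists>m. Ch m = 1 \<and> Al m = x \<and> Om m = y)"
proof -
  obtain M \<alpha> \<omega> where a1: "(1, \<alpha>) \<in> S" and o1: "(1, \<omega>) \<in> S"
    and dom: "\<forall>m\<in>M. \<alpha> [m] \<noteq> None \<and> \<omega> [m] \<noteq> None"
    and chi: "(1, (\<lambda>xs. if length xs = 1 then Some (if hd xs \<in> M then 1 else 0) else None)) \<in> S"
    and iff: "\<forall>x y. g [x] = Some y \<longleftrightarrow> (\<exists>m\<in>M. \<alpha> [m] = Some x \<and> \<omega> [m] = Some y)"
    using cond2S[rule_format, OF assms] by (elim exE conjE) blast
  have chiT: "tK 1 (\<lambda>xs. ind (hd xs \<in> M))"
    using chi by (simp add: tK_def tot_def ind_def)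
  show ?thesis
  proof (cases "M = {}")
    case True
    show ?thesis
      by (rule that[of "\<lambda>_. 0" "\<lambda>_. 0" "\<lambda>_. 0"]) (simp_all add: tK_const iff True)
  next
    case False
    then obtain m0 where m0: "m0 \<in> M" by auto
    define s where "s m = (if m \<in> M then m else m0)" for m
    have sM: "s m \<in> M" for m using m0 by (simp add: s_def)
    have tS: "tK 1 (\<lambda>xs. s (hd xs))" unfolding s_def
      by (intro tK_if chiT tK_hd tK_const) simp_all
    have tA: "tK 1 (\<lambda>xs. the (\<alpha> [s (hd xs)]))"
      by (rule tK_compP1[OF a1 _ tS]) (use dom sM in auto)
    have tO: "tK 1 (\<lambda>xs. the (\<omega> [s (hd xs)]))"
      by (rule tK_compP1[OF o1 _ tS]) (use dom sM in auto)
    have eq: "g [x] = Some y \<longleftrightarrow> (\<exists>m. ind (m \<in> M) = 1 \<and> the (\<alpha> [s m]) = x \<and> the (\<omega> [s m]) = y)" for x y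
      unfolding iff[rule_format]
    proof
      assume "\<exists>m\<in>M. \<alpha> [m] = Some x \<and> \<omega> [m] = Some y"
      then obtain m where "m \<in> M" "\<alpha> [m] = Some x" "\<omega> [m] = Some y" by blast
      then show "\<exists>m. ind (m \<in> M) = 1 \<and> the (\<alpha> [s m]) = x \<and> the (\<omega> [s m]) = y"
        by (intro exI[of _ m]) (simp add: s_def)
    next
      assume "\<exists>m. ind (m \<in> M) = 1 \<and> the (\<alpha> [s m]) = x \<and> the (\<omega> [s m]) = y"
      then obtain m where "m \<in> M" "the (\<alpha> [s m]) = x" "the (\<omega> [s m]) = y" by auto
      moreover have "\<alpha> [m] \<noteq> None" "\<omega> [m] \<noteq> None" using dom \<open>m \<in> M\<close> by auto
      ultimately show "\<exists>m\<in>M. \<alpha> [m] = Some x \<and> \<omega> [m] = Some y"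
        by (intro bexI[of _ m]) (auto simp: s_def)
    qed
    show ?thesis
      by (rule that[of "\<lambda>m. the (\<alpha> [s m])" "\<lambda>m. the (\<omega> [s m])" "\<lambda>m. ind (m \<in> M)", OF tA tO chiT eq])
  qed
qed

lemma univT:
  assumes "tK 1 (\<lambda>xs. A (hd xs))"
  obtains n where "\<And>x. F [n, x] = Some (A x)"
proof -
  have "(1, tot 1 (\<lambda>xs. A (hd xs))) \<in> S" using assms by (simp add: tK_def)
  then obtain n where "\<forall>x. F [n, x] = tot 1 (\<lambda>xs. A (hd xs)) [x]" using univS by blast
  then show ?thesis by (intro that[of n]) (simp add: tot_def)
qed

end


context mainl begin


lemma dirA:
  assumes k: "1 \<le> k" and fS: "(k, f) \<in> S" and ar: "has_arity k f"
  shows "rel_partrec k f 2 F"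
proof -
  define hs where "hs = map (\<lambda>i. tot 1 (\<lambda>xs. hdd ((tld^^i) (hd xs)))) [0..<k]"
  define f' where "f' = pcomp 1 f hs"
  have hsS: "\<forall>h\<in>set hs. (1, h) \<in> S"
  proof
    fix h assume "h \<in> set hs"
    then obtain i where h: "h = tot 1 (\<lambda>xs. hdd ((tld^^i) (hd xs)))" by (auto simp: hs_def)
    have "tK 1 (\<lambda>xs. hdd ((tld^^i) (hd xs)))" by (intro tK_hdd tK_tldpow tK_hd) simp_all
    then show "(1, h) \<in> S" by (simp add: tK_def h)
  qed
  have f'S: "(1, f') \<in> S" unfolding f'_def
    by (rule compS[OF k order_refl fS]) (use hsS in \<open>simp_all add: hs_def\<close>)
  have f'v: "f' [z] = f (map (\<lambda>i. hdd ((tld^^i) z)) [0..<k])" for z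
    by (simp add: f'_def pcomp_def hs_def tot_def comp_def)
  have dz: "map (\<lambda>i. hdd ((tld^^i) (list_encode xs))) [0..<k] = xs" if "length xs = k" for xs
    using that by (intro nth_equalityI) (auto simp: nth_tld)
  obtain Al Om Ch where tA: "tK 1 (\<lambda>xs. Al (hd xs))" and tO: "tK 1 (\<lambda>xs. Om (hd xs))"
    and tC: "tK 1 (\<lambda>xs. Ch (hd xs))" and ch: "\<And>x y. f' [x] = Some y \<longleftrightarrow> (\<exists>m. Ch m = 1 \<and> Al m = x \<and> Om m = y)"
    using c2t[OF f'S] by blast
  obtain a where Fa: "\<And>x. F [a, x] = Some (Al x)" using univT[OF tA] by blast
  obtain b where Fb: "\<And>x. F [b, x] = Some (Om x)" using univT[OF tO] by blast
  obtain c where Fc: "\<And>x. F [c, x] = Some (Ch x)" using univT[OF tC] by blast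
  have KEY: "f xs = Some y \<longleftrightarrow> (\<exists>m. F [c, m] = Some 1 \<and> F [a, m] = Some (list_encode xs) \<and> F [b, m] = Some y)"
    if "length xs = k" for xs y
  proof -
    have "f xs = f' [list_encode xs]" using f'v dz[OF that] by simp
    then show ?thesis using ch Fa Fb Fc by simp
  qed
  define SE where "SE m xs y = set_encode {list_encode [c, m, 1], list_encode [a, m, list_encode xs], list_encode [b, m, y]}" for m xs y
  define W where "W = {list_encode [list_encode (xs @ [y]), SE m xs y] | xs y m. length xs = k}"
  have SEd: "set_decode (SE m xs y) = {list_encode [c, m, 1], list_encode [a, m, list_encode xs], list_encode [b, m, y]}" for m xs y
    by (simp add: SE_def)
  have iff: "v \<in> graph k f \<longleftrightarrow> (\<exists>u. list_encode [v, u] \<in> W \<and> set_decode u \<subseteq> graph 2 F)" for v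
  proof
    assume "v \<in> graph k f"
    then obtain xs y where v: "v = list_encode (xs @ [y])" "length xs = k" "f xs = Some y"
      by (auto simp: graph_def)
    then obtain m where m: "F [c, m] = Some 1" "F [a, m] = Some (list_encode xs)" "F [b, m] = Some y"
      using KEY by blast
    show "\<exists>u. list_encode [v, u] \<in> W \<and> set_decode u \<subseteq> graph 2 F"
    proof (intro exI conjI)
      show "list_encode [v, SE m xs y] \<in> W" using v by (auto simp: W_def)
      show "set_decode (SE m xs y) \<subseteq> graph 2 F" using m by (simp add: SEd graph2 del: list_encode.simps)
    qed
  next
    assume "\<exists>u. list_encode [v, u] \<in> W \<and> set_decode u \<subseteq> graph 2 F"
    then obtain u where u: "list_encode [v, u] \<in> W" "set_decode u \<subseteq> graph 2 F" by blast
    then obtain xs y m where "list_encode [v, u] = list_encode [list_encode (xs @ [y]), SE m xs y]" and len: "length xs = k"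
      by (auto simp: W_def)
    then have vu: "v = list_encode (xs @ [y])" "u = SE m xs y" by (simp_all add: list_encode_eq)
    then have "F [c, m] = Some 1 \<and> F [a, m] = Some (list_encode xs) \<and> F [b, m] = Some y"
      using u(2) by (simp add: SEd graph2 del: list_encode.simps)
    then have "f xs = Some y" using KEY[OF len] by blast
    then show "v \<in> graph k f" using vu graph_mem[OF len] by simp
  qed
  have reW: "re_set W"
  proof -
    define X where "X s = map (\<lambda>i. hdd ((tld^^i) (hdd s))) [0..<k]" for s
    define E where "E s = list_encode [list_encode (X s @ [hdd (tld s)]), SE (hdd (tld (tld s))) (X s) (hdd (tld s))]" for s
    have WE: "W = range E"
    proof
      show "W \<subseteq> range E"
      proof
        fix w assume "w \<in> W"
        then obtain xs y m where w: "w = list_encode [list_encode (xs @ [y]), SE m xs y]" and len: "length xs = k"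
          by (auto simp: W_def)
        have "X (list_encode [list_encode xs, y, m]) = xs"
          using dz[OF len] by (simp add: X_def del: list_encode.simps)
        then have "E (list_encode [list_encode xs, y, m]) = w"
          by (simp add: E_def w del: list_encode.simps)
        then show "w \<in> range E" by (metis rangeI)
      qed
      show "range E \<subseteq> W"
      proof
        fix w assume "w \<in> range E"
        then obtain s where ws: "w = E s" by auto
        show "w \<in> W" unfolding W_def ws E_def
          by (intro CollectI exI[of _ "X s"] exI[of _ "hdd (tld s)"] exI[of _ "hdd (tld (tld s))"] conjI refl)
            (simp add: X_def)
      qed
    qed
    have tE: "P.tK 2 (\<lambda>zs. E (zs!0))"
      unfolding E_def X_def SE_def se3
      by (intro P.tK_le_cons P.tK_le_map P.tK_le_map0 P.tK_const P.tK_hdd P.tK_tld P.tK_tldpow P.tK_proj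
          P.tK_add P.tK_pow P.tK_if P.tK_eq P.tK_disj ballI; simp)
    define G where "G zs = ind (zs!1 \<noteq> E (zs!0))" for zs
    have tG: "P.tK 2 G" unfolding G_def
      by (intro P.tK_not P.tK_eq P.tK_proj tE; simp)
    then have "partrec 2 (tot 2 G)" unfolding P.tK_def by simp
    then have pr: "partrec 1 (pmu (tot 2 G))" using partrec.minimize[of 1 "tot 2 G"] by (simp add: numeral_2_eq_2)
    have "W = {x. pmu (tot 2 G) [x] \<noteq> None}"
      unfolding WE by (auto simp: pmu_def tot_def G_def)
    then show ?thesis using pr unfolding re_set_def by blast
  qed
  show ?thesis
    unfolding rel_partrec_def enum_reducible_def using reW iff by blast
qed


lemma map_nth_k: "length xs = k \<Longrightarrow> map (\<lambda>i. xs ! i) [0..<k] = xs"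
  by (intro nth_equalityI) auto

lemma dirB:
  assumes k: "1 \<le> k" and ar: "has_arity k f" and rp: "rel_partrec k f 2 F"
  shows "(k, f) \<in> S"
proof -
  obtain W where reW: "re_set W"
    and Wiff: "\<And>x. x \<in> graph k f \<longleftrightarrow> (\<exists>u. list_encode [x, u] \<in> W \<and> set_decode u \<subseteq> graph 2 F)"
    using rp unfolding rel_partrec_def enum_reducible_def by blast
  obtain \<phi> where pr\<phi>: "partrec 1 \<phi>" and W\<phi>: "W = {x. \<phi> [x] \<noteq> None}"
    using reW unfolding re_set_def by blast
  have \<phi>S: "(1, \<phi>) \<in> S" using recS pr\<phi> by simp
  obtain A1 O1 C1 where tA1: "tK 1 (\<lambda>xs. A1 (hd xs))" and tO1: "tK 1 (\<lambda>xs. O1 (hd xs))"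
    and tC1: "tK 1 (\<lambda>xs. C1 (hd xs))" and ch1: "\<And>x y. \<phi> [x] = Some y \<longleftrightarrow> (\<exists>m. C1 m = 1 \<and> A1 m = x \<and> O1 m = y)"
    using c2t[OF \<phi>S] by blast
  have Wm: "w \<in> W \<longleftrightarrow> (\<exists>m. C1 m = 1 \<and> A1 m = w)" for w
  proof
    assume "w \<in> W"
    then obtain y where "\<phi> [w] = Some y" using W\<phi> by auto
    then show "\<exists>m. C1 m = 1 \<and> A1 m = w" using ch1 by blast
  next
    assume "\<exists>m. C1 m = 1 \<and> A1 m = w"
    then have "\<phi> [w] \<noteq> None" using ch1 by (metis option.distinct(1))
    then show "w \<in> W" using W\<phi> by blast
  qed
  have t1: "tK 1 (\<lambda>xs. hdd (hd xs))" by (intro tK_hdd tK_hd) simp_all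
  have t2: "tK 1 (\<lambda>xs. hdd (tld (hd xs)))" by (intro tK_hdd tK_tld tK_hd) simp_all
  define F' where "F' = pcomp 1 F [tot 1 (\<lambda>xs. hdd (hd xs)), tot 1 (\<lambda>xs. hdd (tld (hd xs)))]"
  have F'S: "(1, F') \<in> S" unfolding F'_def
    using compS[of 2 1 F "[tot 1 (\<lambda>xs. hdd (hd xs)), tot 1 (\<lambda>xs. hdd (tld (hd xs)))]"] FS t1 t2
    by (simp add: tK_def)
  have F'v: "F' [z] = F [hdd z, hdd (tld z)]" for z by (simp add: F'_def pcomp_def tot_def)
  obtain A2 O2 C2 where tA2: "tK 1 (\<lambda>xs. A2 (hd xs))" and tO2: "tK 1 (\<lambda>xs. O2 (hd xs))"
    and tC2: "tK 1 (\<lambda>xs. C2 (hd xs))" and ch2: "\<And>x y. F' [x] = Some y \<longleftrightarrow> (\<exists>m. C2 m = 1 \<and> A2 m = x \<and> O2 m = y)"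
    using c2t[OF F'S] by blast
  define G where "G v m \<longleftrightarrow> C2 m = 1 \<and> list_encode [hdd v, hdd (tld v)] = A2 m \<and> v = list_encode [hdd v, hdd (tld v), O2 m]" for v m
  have Gg: "v \<in> graph 2 F \<longleftrightarrow> (\<exists>m. G v m)" for v
  proof
    assume "v \<in> graph 2 F"
    then obtain xs y where v: "v = list_encode (xs @ [y])" "length xs = 2" "F xs = Some y" by (auto simp: graph_def)
    then obtain n x where xs: "xs = [n, x]" by (auto simp: len_simps)
    have "F' [list_encode [n, x]] = Some y" using F'v v xs by (simp del: list_encode.simps)
    then obtain m where "C2 m = 1" "A2 m = list_encode [n, x]" "O2 m = y" using ch2 by blast
    then show "\<exists>m. G v m" using v xs by (auto simp: G_def simp del: list_encode.simps)
  next
    assume "\<exists>m. G v m"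
    then obtain m where g: "C2 m = 1" "list_encode [hdd v, hdd (tld v)] = A2 m" "v = list_encode [hdd v, hdd (tld v), O2 m]"
      by (auto simp: G_def)
    have "F' [A2 m] = Some (O2 m)" using ch2 g(1) by blast
    then have "F' [list_encode [hdd v, hdd (tld v)]] = Some (O2 m)" using g(2) by simp
    then have "F [hdd v, hdd (tld v)] = Some (O2 m)"
      using F'v[of "list_encode [hdd v, hdd (tld v)]"] by (simp del: list_encode.simps)
    then show "v \<in> graph 2 F" using g(3) graph2 by metis
  qed
  define Q where "Q u B v \<longleftrightarrow> (v \<in> set_decode u \<longrightarrow> (\<exists>m<B. G v m))" for u B v
  define Pr where "Pr xs s \<longleftrightarrow> C1 (hdd (tld (tld s))) = 1 \<and> A1 (hdd (tld (tld s))) = list_encode [list_encode (xs @ [hdd s]), hdd (tld s)]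
     \<and> (\<forall>v<hdd (tld s). Q (hdd (tld s)) (hdd (tld (tld (tld s)))) v)" for xs s
  have sound: "f xs = Some (hdd s)" if len: "length xs = k" and P: "Pr xs s" for xs s
  proof -
    have "list_encode [list_encode (xs @ [hdd s]), hdd (tld s)] \<in> W" using P Wm unfolding Pr_def by blast
    moreover have "set_decode (hdd (tld s)) \<subseteq> graph 2 F"
    proof
      fix v assume v: "v \<in> set_decode (hdd (tld s))"
      then have "v < hdd (tld s)" by (rule setdec_less)
      then have "\<exists>m<hdd (tld (tld (tld s))). G v m" using P v unfolding Pr_def Q_def by blast
      then show "v \<in> graph 2 F" using Gg by blast
    qed
    ultimately have "list_encode (xs @ [hdd s]) \<in> graph k f" using Wiff by blast
    then show ?thesis using graph_mem[OF len] by blast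
  qed
  have complete: "\<exists>s. Pr xs s" if len: "length xs = k" and fy: "f xs = Some y" for xs y
  proof -
    have "list_encode (xs @ [y]) \<in> graph k f" using graph_mem[OF len] fy by blast
    then obtain u where u: "list_encode [list_encode (xs @ [y]), u] \<in> W" "set_decode u \<subseteq> graph 2 F"
      using Wiff by blast
    then obtain m1 where m1: "C1 m1 = 1" "A1 m1 = list_encode [list_encode (xs @ [y]), u]" using Wm by blast
    have "\<forall>v\<in>set_decode u. \<exists>m. G v m" using u(2) Gg by blast
    then obtain B where B: "\<forall>v\<in>set_decode u. \<exists>m<B. G v m" using fin_bound[OF finite_set_decode] by blast
    have "Pr xs (list_encode [y, u, m1, B])" unfolding Pr_def Q_def using m1 B by (simp del: list_encode.simps)
    then show ?thesis by blast
  qed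
  have I1: "tK 2 (\<lambda>zs. ind (G (zs!1) (zs!0)))" unfolding G_def
    by (intro tK_conj tK_eq tK_un[OF tC2] tK_un[OF tA2] tK_un[OF tO2] tK_le_cons tK_const tK_hdd tK_tld tK_proj; simp)
  have I2: "tK 2 (\<lambda>zs. ind (\<exists>m<zs!0. G (zs!1) m))" by (rule tK_bex2[OF I1])
  have I2': "tK 3 (\<lambda>zs. ind (\<exists>m<zs!2. G (zs!0) m))"
    using tK_comp2[OF I2, of 3 "\<lambda>zs. zs!2" "\<lambda>zs. zs!0"] tK_proj[of 3 2] tK_proj[of 3 0] by simp
  have mem: "tK 3 (\<lambda>zs. ind (zs!0 \<in> set_decode (zs!1)))"
    by (rule tK_cong[where f="\<lambda>zs. ind (odd (zs!1 div 2 ^ zs!0))"], (intro tK_odd tK_div tK_pow tK_proj tK_const; simp))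
      (simp add: set_decode_def)
  have I3: "tK 3 (\<lambda>zs. ind (Q (zs!1) (zs!2) (zs!0)))" unfolding Q_def
    by (intro tK_imp mem I2'; simp)
  have I4: "tK 3 (\<lambda>zs. ind (\<forall>v<zs!0. Q (zs!1) (zs!2) v))" by (rule tK_ball3[OF I3])
  have u: "tK (Suc k) (\<lambda>zs. hdd (tld (zs!0)))" by (intro tK_hdd tK_tld tK_proj) simp_all
  have b: "tK (Suc k) (\<lambda>zs. hdd (tld (tld (tld (zs!0)))))" by (intro tK_hdd tK_tld tK_proj) simp_all
  have I5: "tK (Suc k) (\<lambda>zs. ind (\<forall>v<hdd (tld (zs!0)). Q (hdd (tld (zs!0))) (hdd (tld (tld (tld (zs!0))))) v))"
    using tK_comp3[OF I4 _ u u b] by simp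
  have I6: "tK (Suc k) (\<lambda>zs. ind (\<not> (C1 (hdd (tld (tld (zs!0)))) = 1 \<and>
      A1 (hdd (tld (tld (zs!0)))) = list_encode [list_encode (map (\<lambda>i. zs!(Suc i)) [0..<k] @ [hdd (zs!0)]), hdd (tld (zs!0))] \<and>
      (\<forall>v<hdd (tld (zs!0)). Q (hdd (tld (zs!0))) (hdd (tld (tld (tld (zs!0))))) v))))"
    by (intro tK_not tK_conj I5 tK_eq tK_un[OF tC1] tK_un[OF tA1] tK_le_cons tK_le_map ballI tK_const tK_hdd tK_tld tK_proj; simp)
  define H where "H zs = ind (\<not> Pr (tl zs) (hd zs))" for zs
  have tH: "tK (Suc k) H"
    by (rule tK_cong[OF I6], case_tac xs, simp, simp add: H_def Pr_def map_nth_k)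
  have HS: "(k, pmu (tot (Suc k) H)) \<in> S" using muS[OF k] tH unfolding tK_def by simp
  have hdS: "(1, tot 1 (\<lambda>ys. hdd (hd ys))) \<in> S" using t1 unfolding tK_def .
  have resS: "(k, pcomp k (tot 1 (\<lambda>ys. hdd (hd ys))) [pmu (tot (Suc k) H)]) \<in> S"
    by (rule compS[OF order_refl k hdS]) (use HS in simp_all)
  have feq: "f = pcomp k (tot 1 (\<lambda>ys. hdd (hd ys))) [pmu (tot (Suc k) H)]"
  proof
    fix xs
    show "f xs = pcomp k (tot 1 (\<lambda>ys. hdd (hd ys))) [pmu (tot (Suc k) H)] xs"
    proof (cases "length xs = k")
      case False
      then show ?thesis using ar by (simp add: has_arity_def pcomp_def)
    next
      case True
      have pm: "pmu (tot (Suc k) H) xs = (if \<exists>s. Pr xs s then Some (LEAST s. Pr xs s) else None)"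
        using True by (simp add: pmu_def tot_def H_def)
      show ?thesis
      proof (cases "\<exists>s. Pr xs s")
        assume ex: "\<exists>s. Pr xs s"
        have "Pr xs (LEAST s. Pr xs s)" using ex by (rule LeastI_ex)
        then have "f xs = Some (hdd (LEAST s. Pr xs s))" using sound[OF True] by blast
        then show ?thesis using pm True ex by (simp add: pcomp_def tot_def)
      next
        assume nex: "\<not> (\<exists>s. Pr xs s)"
        have "f xs = None"
        proof (rule ccontr)
          assume "f xs \<noteq> None"
          then obtain y where "f xs = Some y" by auto
          then show False using complete[OF True] nex by blast
        qed
        then show ?thesis using pm True nex by (simp add: pcomp_def)
      qed
    qed
  qed
  show ?thesis using resS feq by simp
qed
end


theorem lemma1:
  fixes K :: "(nat \<times> pfun) set" and F :: pfun
  assumes wf: "\<forall>(k, f)\<in>K. k \<ge> 1 \<and> has_arity k f"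
    and rec: "\<forall>k f. k \<ge> 1 \<longrightarrow> partrec k f \<longrightarrow> (k, f) \<in> K"
    and subst: "\<forall>m k g hs. m \<ge> 1 \<longrightarrow> k \<ge> 1 \<longrightarrow> (m, g) \<in> K \<longrightarrow> length hs = m
                  \<longrightarrow> (\<forall>h\<in>set hs. (k, h) \<in> K) \<longrightarrow> (k, pcomp k g hs) \<in> K"
    and primr: "\<forall>k g h. has_arity k g
                  \<longrightarrow> (if k = 0 then (\<exists>c. g = (\<lambda>xs. if xs = [] then Some c else None))
                      else (k, g) \<in> K)
                  \<longrightarrow> (k + 2, h) \<in> K \<longrightarrow> (k + 1, prec g h) \<in> K"
    and muc: "\<forall>k g. k \<ge> 1 \<longrightarrow> (k + 1, g) \<in> K \<longrightarrow> (k, pmu g) \<in> K"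
    and cond2: "\<forall>f. (1, f) \<in> K \<longrightarrow>
                  (\<exists>M \<alpha> \<omega>. (1, \<alpha>) \<in> K \<and> (1, \<omega>) \<in> K
                     \<and> (\<forall>m\<in>M. \<alpha> [m] \<noteq> None \<and> \<omega> [m] \<noteq> None)
                     \<and> (1, (\<lambda>xs. if length xs = 1 then Some (if hd xs \<in> M then 1 else 0) else None)) \<in> K
                     \<and> (\<forall>x y. f [x] = Some y \<longleftrightarrow> (\<exists>m\<in>M. \<alpha> [m] = Some x \<and> \<omega> [m] = Some y)))"
    and FK: "(2, F) \<in> K"
    and univ: "\<forall>f. (1, f) \<in> K \<longrightarrow> (\<exists>n. \<forall>x. F [n, x] = f [x])"
  shows "\<forall>k f. k \<ge> 1 \<longrightarrow> has_arity k f \<longrightarrow> ((k, f) \<in> K \<longleftrightarrow> rel_partrec k f 2 F)"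
  proof -
  interpret M: mainl K F
    apply unfold_locales
    subgoal using rec partrec.zero by (simp add: tot_def)
    subgoal using rec partrec.succ by (simp add: tot_def)
    subgoal for k i using rec partrec.proj[of i k] by (simp add: tot_def)
    subgoal for m k g hs using subst by blast
    subgoal for k g h
    proof -
      assume a: "1 \<le> k" "(k, g) \<in> K" "(k + 2, h) \<in> K"
      have "has_arity k g" using wf a(2) by auto
      then show ?thesis using primr a by auto
    qed
    subgoal using muc by blast
    subgoal using rec by blast
    subgoal using cond2 by blast
    subgoal using FK .
    subgoal using univ by blast
    done
  show ?thesis
  proof (intro allI impI)
    fix k f assume "k \<ge> 1" "has_arity k f"
    then show "(k, f) \<in> K \<longleftrightarrow> rel_partrec k f 2 F" using M.dirA M.dirB by blast
  qed
qed

end
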